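(* Let $A\in\mathbb{R}^{r\times n}$, $\mathcal{X}\subseteq\mathbb{R}^n$, and let $f:\mathcal{D}\to\mathbb{R}$ be upper semicontinuous and quasi-convex, where $\mathcal{D}\subseteq\mathbb{R}^r$ is open and convex, and the set $A\mathcal{X}=\{Ax: x\in\mathcal{X}\}$ is compact with $A\mathcal{X}\subseteq\mathcal{D}$. Then there exists $c\in\mathbb{R}^r$ such that every optimal solution of $\max_{x\in\mathcal{X}}c^\top Ax$ is also an optimal solution of $\max\{f(Ax): x\in\mathcal{X}\}$.
   Context: A function $g:\mathcal{D}\to\mathbb{R}$ on a convex open set $\mathcal{D}$ is quasi-convex if $\{x\in\mathcal{D}: g(x)\le t\}$ is convex for every $t\in\mathbb{R}$. *)

theory Defs
  imports "HOL-Analysis.Analysis"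
begin

definition quasi_convex_on :: "'a::real_vector set \<Rightarrow> ('a \<Rightarrow> real) \<Rightarrow> bool" where
  "quasi_convex_on D g \<longleftrightarrow> (\<forall>t::real. convex {x\<in>D. g x \<le> t})"

definition upper_semicontinuous_on :: "'a::metric_space set \<Rightarrow> ('a \<Rightarrow> real) \<Rightarrow> bool" where
  "upper_semicontinuous_on D g \<longleftrightarrow>
     (\<forall>x\<in>D. \<forall>t. g x < t \<longrightarrow> (\<exists>e>0. \<forall>y\<in>D. dist y x < e \<longrightarrow> g y < t))"

end

theory Submission
  imports Defs
begin

lemma usc_attains_max:
  fixes f :: "'a::metric_space \<Rightarrow> real"
  assumes usc: "upper_semicontinuous_on D f" and K: "compact K" "K \<subseteq> D" "K \<noteq> {}"
  shows "\<exists>z0\<in>K. \<forall>z\<in>K. f z \<le> f z0"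
proof (rule ccontr)
  assume "\<not> ?thesis"
  then have "\<forall>z\<in>K. \<exists>w\<in>K. f z < f w" by (meson not_le)
  then obtain w where w: "\<And>z. z\<in>K \<Longrightarrow> w z \<in> K \<and> f z < f (w z)" by metis
  have "\<forall>z\<in>K. \<exists>e>0. \<forall>y\<in>D. dist y z < e \<longrightarrow> f y < f (w z)"
    using usc w K(2) unfolding upper_semicontinuous_on_def by blast
  then obtain e where e: "\<And>z. z\<in>K \<Longrightarrow> e z > 0 \<and> (\<forall>y\<in>D. dist y z < e z \<longrightarrow> f y < f (w z))" by metis
  have "K \<subseteq> (\<Union>z\<in>K. ball z (e z))" using e by force
  then obtain F where F: "F \<subseteq> K" "finite F" "K \<subseteq> (\<Union>z\<in>F. ball z (e z))"
    using compactE_image[OF K(1), of K "\<lambda>z. ball z (e z)"] by blast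
  have "F \<noteq> {}" using F K(3) by auto
  then obtain z1 where z1: "z1 \<in> F" "\<forall>z\<in>F. f (w z) \<le> f (w z1)"
  proof -
    have fin: "finite ((\<lambda>z. f (w z)) ` F)" "(\<lambda>z. f (w z)) ` F \<noteq> {}" using F(2) \<open>F \<noteq> {}\<close> by auto
    obtain z1 where "z1 \<in> F" "f (w z1) = Max ((\<lambda>z. f (w z)) ` F)" using Max_in[OF fin] by auto
    moreover have "\<forall>z\<in>F. f (w z) \<le> Max ((\<lambda>z. f (w z)) ` F)" using Max_ge[OF fin(1)] by auto
    ultimately show ?thesis using that by auto
  qed
  have "w z1 \<in> K" using w z1 F by blast
  then obtain z2 where z2: "z2 \<in> F" "w z1 \<in> ball z2 (e z2)" using F by blast
  have "z2 \<in> K" using z2 F by auto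
  then have "f (w z1) < f (w z2)" using e[of z2] K(2) \<open>w z1 \<in> K\<close> z2(2) by (auto simp: dist_commute)
  with z1 z2 show False by force
qed

theorem proposition8:
  fixes A :: "real^'n^'r"
    and X :: "(real^'n) set"
    and D :: "(real^'r) set"
    and f :: "real^'r \<Rightarrow> real"
  assumes "open D" and "convex D"
    and "upper_semicontinuous_on D f"
    and "quasi_convex_on D f"
    and "compact ((\<lambda>x. A *v x) ` X)"
    and "(\<lambda>x. A *v x) ` X \<subseteq> D"
  shows "\<exists>c :: real^'r. \<forall>x\<in>X.
           (\<forall>y\<in>X. c \<bullet> (A *v y) \<le> c \<bullet> (A *v x)) \<longrightarrow>
           (\<forall>y\<in>X. f (A *v y) \<le> f (A *v x))"
proof (cases "X = {}")
  case True then show ?thesis by auto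
next
  case False
  let ?K = "(\<lambda>x. A *v x) ` X"
  obtain z0 where z0: "z0 \<in> ?K" "\<forall>z\<in>?K. f z \<le> f z0"
    using usc_attains_max[OF assms(3) assms(5) assms(6)] False by blast
  define U where "U = {z\<in>D. f z < f z0}"
  have convU: "convex U"
  proof (rule convexI)
    fix u v :: "real^'r" and a b :: real
    assume uv: "u \<in> U" "v \<in> U" and ab0: "0 \<le> a" "0 \<le> b" "a + b = 1"
    then have ab: "0 \<le> a \<and> 0 \<le> b \<and> a + b = 1" by simp
    let ?t = "max (f u) (f v)"
    have "convex {x\<in>D. f x \<le> ?t}" using assms(4) unfolding quasi_convex_on_def by blast
    moreover have "u \<in> {x\<in>D. f x \<le> ?t}" "v \<in> {x\<in>D. f x \<le> ?t}" using uv unfolding U_def by auto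
    ultimately have "a *\<^sub>R u + b *\<^sub>R v \<in> {x\<in>D. f x \<le> ?t}" using ab unfolding convex_def by blast
    then show "a *\<^sub>R u + b *\<^sub>R v \<in> U" using uv unfolding U_def by auto
  qed
  have z0U: "z0 \<notin> U" unfolding U_def by auto
  have "convex ((\<lambda>u. z0 - u) ` U)" 
  proof -
    have eq: "(\<lambda>u. z0 - u) ` U = (+) z0 ` ((\<lambda>x. - x) ` U)" by (simp add: image_image)
    show ?thesis unfolding eq by (rule convex_translation[OF convex_negations[OF convU]])
  qed
  moreover have "0 \<notin> (\<lambda>u. z0 - u) ` U" using z0U by auto
  ultimately obtain c where c: "c \<noteq> 0" "\<forall>x\<in>(\<lambda>u. z0 - u) ` U. 0 \<le> c \<bullet> x"
    using separating_hyperplane_set_0 by blast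
  have cle: "c \<bullet> u \<le> c \<bullet> z0" if "u \<in> U" for u
    using c(2) that by (force simp: inner_diff_right)
  have strict: "c \<bullet> u < c \<bullet> z0" if u: "u \<in> U" for u
  proof -
    from u have uD: "u \<in> D" and fu: "f u < f z0" unfolding U_def by auto
    obtain e1 where e1: "e1 > 0" "\<forall>y\<in>D. dist y u < e1 \<longrightarrow> f y < f z0"
      using assms(3) uD fu unfolding upper_semicontinuous_on_def by blast
    obtain e2 where e2: "e2 > 0" "ball u e2 \<subseteq> D" using assms(1) uD open_contains_ball by blast
    define e where "e = min e1 e2 / (2 * norm c)"
    have nc: "norm c > 0" using c(1) by simp
    have ep: "e > 0" unfolding e_def using e1 e2 nc by simp
    have "dist (u + e *\<^sub>R c) u = e * norm c" using ep by (simp add: dist_norm)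
    also have "\<dots> = min e1 e2 / 2" unfolding e_def using nc by simp
    finally have d: "dist (u + e *\<^sub>R c) u < e1" "dist (u + e *\<^sub>R c) u < e2" using e1 e2 by auto
    then have "u + e *\<^sub>R c \<in> D" using e2 by (auto simp: dist_commute)
    with d e1 have "u + e *\<^sub>R c \<in> U" unfolding U_def by auto
    then have "c \<bullet> (u + e *\<^sub>R c) \<le> c \<bullet> z0" by (rule cle)
    moreover have "c \<bullet> c > 0" using c(1) by simp
    moreover have "c \<bullet> (u + e *\<^sub>R c) = c \<bullet> u + e * (c \<bullet> c)" by (simp add: inner_add_right)
    moreover have "e * (c \<bullet> c) > 0" using ep \<open>c \<bullet> c > 0\<close> by simp
    ultimately show ?thesis by linarith
  qed
  show ?thesis
  proof (rule exI[of _ c], intro ballI impI)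
    fix x y assume x: "x \<in> X" and mx: "\<forall>y\<in>X. c \<bullet> (A *v y) \<le> c \<bullet> (A *v x)" and y: "y \<in> X"
    obtain x0 where "x0 \<in> X" "z0 = A *v x0" using z0 by auto
    then have "c \<bullet> z0 \<le> c \<bullet> (A *v x)" using mx by auto
    then have "A *v x \<notin> U" using strict by force
    moreover have "A *v x \<in> D" using x assms(6) by auto
    ultimately have "f z0 \<le> f (A *v x)" unfolding U_def by auto
    moreover have "f (A *v y) \<le> f z0" using z0 y by auto
    ultimately show "f (A *v y) \<le> f (A *v x)" by linarith
  qed
qed
end
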